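(* Let $G$ be a bounded metric operator on $\mathcal H$ and $S$ a closed densely defined operator in $\mathcal H$. Define $K$ on $D(K)=G^{1/2}D(S)$ by $K\xi=G^{1/2}SG^{-1/2}\xi$. Then $K$ is densely defined and $K^*=G^{-1/2}S^*G^{1/2}$, where the latter operator has its natural domain $\{\eta\in\mathcal H: G^{1/2}\eta\in D(S^* ),\ S^*G^{1/2}\eta\in D(G^{-1/2})\}$.
   Context: A metric operator on a Hilbert space $\mathcal H$ is a self-adjoint operator $G$ with $\langle G\xi,\xi\rangle>0$ for all nonzero $\xi\in D(G)$; $G^{-1/2}$ denotes the (possibly unbounded) inverse of $G^{1/2}$, with domain the range of $G^{1/2}$. $S^*$ denotes the Hilbert space adjoint in $\mathcal H$. *)

theory Defs
  imports "HOL-Analysis.Analysis"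
begin

text \<open>HOL-Analysis has no complex inner product spaces, so we introduce a type class:
  a real normed vector space with a compatible complex scalar multiplication and a
  complex inner product (linear in the first, conjugate-linear in the second argument)
  inducing the norm. Together with complete_space this is a complex Hilbert space.\<close>

class complex_inner = real_normed_vector +
  fixes scaleC :: "complex \<Rightarrow> 'a \<Rightarrow> 'a"
    and cinner :: "'a \<Rightarrow> 'a \<Rightarrow> complex"
  assumes scaleC_scaleR: "scaleC (complex_of_real r) x = scaleR r x"
    and scaleC_add_right: "scaleC a (x + y) = scaleC a x + scaleC a y"
    and scaleC_add_left: "scaleC (a + b) x = scaleC a x + scaleC b x"
    and scaleC_scaleC: "scaleC a (scaleC b x) = scaleC (a * b) x"
    and scaleC_one: "scaleC 1 x = x"
    and cinner_conj: "cinner x y = cnj (cinner y x)"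
    and cinner_add_left: "cinner (x + y) z = cinner x z + cinner y z"
    and cinner_scaleC_left: "cinner (scaleC a x) y = a * cinner x y"
    and cinner_self_norm: "cinner x x = complex_of_real ((norm x)\<^sup>2)"

text \<open>A (possibly unbounded) operator is represented by its graph, a set of pairs.\<close>

definition graph_subspace :: "('a::complex_inner \<times> 'a) set \<Rightarrow> bool" where
  "graph_subspace T \<longleftrightarrow> (0, 0) \<in> T
     \<and> (\<forall>x y u v. (x, y) \<in> T \<longrightarrow> (u, v) \<in> T \<longrightarrow> (x + u, y + v) \<in> T)
     \<and> (\<forall>a x y. (x, y) \<in> T \<longrightarrow> (scaleC a x, scaleC a y) \<in> T)"

definition lin_op :: "('a::complex_inner \<times> 'a) set \<Rightarrow> bool" where
  "lin_op T \<longleftrightarrow> graph_subspace T \<and> single_valued T"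

definition densely_defined :: "('a::complex_inner \<times> 'a) set \<Rightarrow> bool" where
  "densely_defined T \<longleftrightarrow> closure (Domain T) = UNIV"

definition closed_op :: "('a::complex_inner \<times> 'a) set \<Rightarrow> bool" where
  "closed_op T \<longleftrightarrow> lin_op T \<and> closed T"

definition adjoint_op :: "('a::complex_inner \<times> 'a) set \<Rightarrow> ('a \<times> 'a) set" where
  "adjoint_op T = {(y, z). \<forall>x w. (x, w) \<in> T \<longrightarrow> cinner w y = cinner x z}"

definition gr :: "('a \<Rightarrow> 'a) \<Rightarrow> ('a \<times> 'a) set" where
  "gr f = {(x, f x) | x. True}"

definition bounded_clinear_op :: "('a::complex_inner \<Rightarrow> 'a) \<Rightarrow> bool" where
  "bounded_clinear_op f \<longleftrightarrow> (\<forall>x y. f (x + y) = f x + f y)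
     \<and> (\<forall>a x. f (scaleC a x) = scaleC a (f x))
     \<and> (\<exists>C. \<forall>x. norm (f x) \<le> C * norm x)"

definition self_adjoint_bounded :: "('a::complex_inner \<Rightarrow> 'a) \<Rightarrow> bool" where
  "self_adjoint_bounded f \<longleftrightarrow> bounded_clinear_op f \<and> (\<forall>x y. cinner (f x) y = cinner x (f y))"

definition bounded_metric_op :: "('a::complex_inner \<Rightarrow> 'a) \<Rightarrow> bool" where
  "bounded_metric_op G \<longleftrightarrow> self_adjoint_bounded G
     \<and> (\<forall>x. x \<noteq> 0 \<longrightarrow> Im (cinner (G x) x) = 0 \<and> Re (cinner (G x) x) > 0)"

definition is_pos_sqrt :: "('a::complex_inner \<Rightarrow> 'a) \<Rightarrow> ('a \<Rightarrow> 'a) \<Rightarrow> bool" where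
  "is_pos_sqrt G R \<longleftrightarrow> self_adjoint_bounded R
     \<and> (\<forall>x. Im (cinner (R x) x) = 0 \<and> Re (cinner (R x) x) \<ge> 0)
     \<and> (\<forall>x. R (R x) = G x)"

end

theory Submission
  imports Defs
begin

lemma cinner_add_right: "cinner x (y + z) = cinner x y + cinner x (z::'a::complex_inner)"
  by (metis cinner_conj cinner_add_left complex_cnj_add)

lemma cinner_zero_left[simp]: "cinner 0 (y::'a::complex_inner) = 0"
  using cinner_add_left[of 0 0 y] by simp

lemma cinner_scaleR_right: "cinner x (scaleR t y) = of_real t * cinner x (y::'a::complex_inner)"
proof -
  have "cinner x (scaleR t y) = cnj (cinner (scaleC (of_real t) y) x)"
    by (metis cinner_conj scaleC_scaleR)
  also have "\<dots> = of_real t * cinner x y"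
    using cinner_scaleC_left cinner_conj by (metis complex_cnj_complex_of_real complex_cnj_mult)
  finally show ?thesis .
qed

lemma norm_sq_Re: "(norm x)\<^sup>2 = Re (cinner x (x::'a::complex_inner))"
  by (simp add: cinner_self_norm)

lemma Re_cinner_sym: "Re (cinner x y) = Re (cinner y (x::'a::complex_inner))"
  by (subst cinner_conj, simp)

lemma norm_add_sq: "(norm (a + b))\<^sup>2 = (norm a)\<^sup>2 + 2 * Re (cinner a b) + (norm (b::'a::complex_inner))\<^sup>2"
  by (simp add: norm_sq_Re cinner_add_left cinner_add_right Re_cinner_sym[of b a])

lemma parallelogram: "(norm (a + b))\<^sup>2 + (norm (a - b))\<^sup>2 = 2*(norm a)\<^sup>2 + 2*(norm (b::'a::complex_inner))\<^sup>2"
proof -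
  have "a - b = a + scaleR (-1) b" by simp
  then have "(norm (a - b))\<^sup>2 = (norm a)\<^sup>2 - 2 * Re (cinner a b) + (norm b)\<^sup>2"
    using norm_add_sq[of a "scaleR (-1) b"] cinner_scaleR_right[of a "-1" b] by (simp del: scaleR_minus_left add: norm_minus_cancel)
  then show ?thesis using norm_add_sq[of a b] by simp
qed

lemma min_dist_point:
  fixes M :: "'a::{complex_inner,complete_space} set"
  assumes cl: "closed M" and z: "0 \<in> M"
    and add: "\<And>x y. x \<in> M \<Longrightarrow> y \<in> M \<Longrightarrow> x + y \<in> M"
    and sc: "\<And>t x. x \<in> M \<Longrightarrow> scaleR t x \<in> M"
  shows "\<exists>m\<in>M. \<forall>m'\<in>M. (norm (y - m))\<^sup>2 \<le> (norm (y - m'))\<^sup>2"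
proof -
  define D where "D = Inf ((\<lambda>m. (norm (y - m))\<^sup>2) ` M)"
  have bdd: "bdd_below ((\<lambda>m. (norm (y - m))\<^sup>2) ` M)"
    by (rule bdd_belowI[of _ 0]) auto
  have Dle: "D \<le> (norm (y - m))\<^sup>2" if "m \<in> M" for m
    unfolding D_def using bdd that by (simp add: cInf_lower)
  have "\<exists>m\<in>M. (norm (y - m))\<^sup>2 < D + 1 / (real n + 1)" for n
  proof -
    have "Inf ((\<lambda>m. (norm (y - m))\<^sup>2) ` M) < D + 1 / (real n + 1)"
      unfolding D_def by (simp add: add_pos_pos)
    then show ?thesis using z by (subst (asm) cInf_less_iff) (auto simp: bdd)
  qed
  then obtain f where fM: "\<And>n. f n \<in> M" and fD: "\<And>n. (norm (y - f n))\<^sup>2 < D + 1 / (real n + 1)"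
    by metis
  have fdist: "(norm (f a - f b))\<^sup>2 \<le> 2 / (real a + 1) + 2 / (real b + 1)" for a b
  proof -
    have mid: "scaleR (1/2) (f a + f b) \<in> M" using fM add sc by blast
    have e1: "(y - f a) + (y - f b) = scaleR 2 (y - scaleR (1/2) (f a + f b))"
      by (simp add: algebra_simps scaleR_2)
    have "(norm ((y - f a) + (y - f b)))\<^sup>2 = 4 * (norm (y - scaleR (1/2) (f a + f b)))\<^sup>2"
      unfolding e1 by (simp add: power_mult_distrib)
    moreover have ee: "(y - f a) - (y - f b) = f b - f a" by simp
    moreover note parallelogram[of "y - f a" "y - f b", unfolded ee]
    ultimately have "(norm (f b - f a))\<^sup>2 + 4 * (norm (y - scaleR (1/2) (f a + f b)))\<^sup>2
        = 2*(norm (y - f a))\<^sup>2 + 2*(norm (y - f b))\<^sup>2" by linarith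
    then show ?thesis using Dle[OF mid] fD[of a] fD[of b] norm_minus_commute[of "f a" "f b"]
        times_divide_eq_right[of 2 1 "real a + 1"] times_divide_eq_right[of 2 1 "real b + 1"]
      by (smt (verit))
  qed
  have "Cauchy f"
  proof (rule metric_CauchyI)
    fix e :: real assume e: "e > 0"
    obtain N :: nat where N: "real N > 4 / e^2" using reals_Archimedean2 by blast
    show "\<exists>N. \<forall>m\<ge>N. \<forall>n\<ge>N. dist (f m) (f n) < e"
    proof (intro exI allI impI)
      fix a b assume a: "a \<ge> N" and b: "b \<ge> N"
      have e2: "e^2 > 0" using e by simp
      have "4 / e^2 < real N + 1" using N by simp
      then have h: "4 / (real N + 1) < e^2" using e2
        by (smt (verit, best) divide_less_eq mult.commute of_nat_0_le_iff)
      have "2 / (real a + 1) \<le> 2 / (real N + 1)" using a by (simp add: frac_le)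
      moreover have "2 / (real b + 1) \<le> 2 / (real N + 1)" using b by (simp add: frac_le)
      ultimately have "(norm (f a - f b))\<^sup>2 < e^2" using fdist[of a b] h by simp
      then have "norm (f a - f b) < e" using e by (simp add: power_less_imp_less_base)
      then show "dist (f a) (f b) < e" by (simp add: dist_norm)
    qed
  qed
  then obtain m where lim: "f \<longlonglongrightarrow> m" using Cauchy_convergent_iff convergent_def by blast
  have mM: "m \<in> M" using cl fM lim closed_sequentially by blast
  have l1: "(\<lambda>n. (norm (y - f n))\<^sup>2) \<longlonglongrightarrow> (norm (y - m))\<^sup>2"
    by (intro tendsto_intros lim)
  have l2: "(\<lambda>n. D + 1 / (real n + 1)) \<longlonglongrightarrow> D + 0"
    using LIMSEQ_inverse_real_of_nat_add[of 0]
    by (intro tendsto_intros) (simp add: inverse_eq_divide add.commute)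
  have "(norm (y - m))\<^sup>2 \<le> D + 0"
    by (rule LIMSEQ_le[OF l1 l2]) (use fD less_imp_le in auto)
  then show ?thesis using mM Dle by (metis add_0_right order_trans)
qed

lemma orth_from_min:
  fixes v u :: "'a::complex_inner"
  assumes "\<And>t. (norm v)\<^sup>2 \<le> (norm (v + scaleR t u))\<^sup>2"
  shows "Re (cinner v u) = 0"
proof -
  define c where "c = Re (cinner v u)"
  define N where "N = (norm u)\<^sup>2"
  have N0: "N \<ge> 0" unfolding N_def by simp
  have key: "0 \<le> 2 * t * c + t^2 * N" for t
    using assms[of t] norm_add_sq[of v "scaleR t u"]
    by (simp add: cinner_scaleR_right c_def N_def power_mult_distrib)
  define s where "s = c / (N + 1)"
  have cs: "c = s * (N + 1)" unfolding s_def using N0 by simp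
  have "0 \<le> 2 * (-s) * c + (-s)^2 * N" by (rule key)
  then have "0 \<le> - (s^2 * (N + 2))" unfolding cs by (simp add: algebra_simps power2_eq_square)
  moreover have "s^2 * (N + 2) \<ge> 0" using N0 by simp
  ultimately have "s^2 * (N + 2) = 0" by linarith
  then have "s = 0" using N0 by simp
  then have "c^2 \<le> 0" using cs by simp
  then show ?thesis unfolding c_def by simp
qed

lemma range_dense:
  fixes G R :: "'a::{complex_inner,complete_space} \<Rightarrow> 'a"
  assumes G: "bounded_metric_op G" and R: "is_pos_sqrt G R"
  shows "closure (range R) = UNIV" and "bounded_linear R"
proof -
  have sa: "self_adjoint_bounded R" using R unfolding is_pos_sqrt_def by simp
  then have addR: "\<And>x y. R (x + y) = R x + R y" and scR: "\<And>a x. R (scaleC a x) = scaleC a (R x)"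
    and bd: "\<exists>C. \<forall>x. norm (R x) \<le> C * norm x" and sym: "\<And>x y. cinner (R x) y = cinner x (R y)"
    unfolding self_adjoint_bounded_def bounded_clinear_op_def by auto
  have RR: "\<And>x. R (R x) = G x" using R unfolding is_pos_sqrt_def by simp
  have scRR: "R (scaleR t x) = scaleR t (R x)" for t x
    using scR[of "complex_of_real t" x] by (simp add: scaleC_scaleR)
  show bl: "bounded_linear R"
  proof
    show "R (x + y) = R x + R y" for x y by (rule addR)
    show "R (scaleR t x) = scaleR t (R x)" for t x by (rule scRR)
    from bd obtain C where C: "\<forall>x. norm (R x) \<le> C * norm x" by blast
    show "\<exists>K. \<forall>x. norm (R x) \<le> norm x * K"
      using C by (metis mult.commute)
  qed
  have zero: "R 0 = 0" using addR[of 0 0] by simp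
  note add = addR
  note scaleR = scRR
  define M where "M = closure (range R)"
  have clM: "closed M" unfolding M_def by (rule closed_closure)
  have "0 \<in> range R" using rangeI[of R 0] unfolding zero .
  then have z: "0 \<in> M" unfolding M_def by (rule closure_subset[THEN subsetD])
  have addM: "x + y \<in> M" if "x \<in> M" "y \<in> M" for x y
  proof -
    have "\<exists>f. (\<forall>n. f n \<in> range R) \<and> f \<longlonglongrightarrow> x" using that(1) unfolding M_def closure_sequential .
    then obtain f where f0: "(\<forall>n. f n \<in> range R) \<and> f \<longlonglongrightarrow> x" ..
    have "\<exists>f. (\<forall>n. f n \<in> range R) \<and> f \<longlonglongrightarrow> y" using that(2) unfolding M_def closure_sequential .
    then obtain g where g0: "(\<forall>n. g n \<in> range R) \<and> g \<longlonglongrightarrow> y" ..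
    note f = conjunct1[OF f0] conjunct2[OF f0]
    note g = conjunct1[OF g0] conjunct2[OF g0]
    have "\<forall>n. f n + g n \<in> range R"
    proof
      fix n
      obtain a b where "f n = R a" "g n = R b" using f(1) g(1) by blast
      then have "f n + g n = R (a + b)" by (simp add: add)
      then show "f n + g n \<in> range R" by simp
    qed
    moreover have "(\<lambda>n. f n + g n) \<longlonglongrightarrow> x + y" using f(2) g(2) by (rule tendsto_add)
    ultimately show ?thesis unfolding M_def closure_sequential by (intro exI[where x="\<lambda>n. f n + g n"] conjI)
  qed
  have scM: "scaleR t x \<in> M" if "x \<in> M" for t x
  proof -
    have "\<exists>f. (\<forall>n. f n \<in> range R) \<and> f \<longlonglongrightarrow> x" using that unfolding M_def closure_sequential .
    then obtain f where f0: "(\<forall>n. f n \<in> range R) \<and> f \<longlonglongrightarrow> x" ..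
    note f = conjunct1[OF f0] conjunct2[OF f0]
    have "\<forall>n. scaleR t (f n) \<in> range R"
    proof
      fix n
      obtain a where "f n = R a" using f(1) by blast
      then have "scaleR t (f n) = R (scaleR t a)" by (simp add: scaleR)
      then show "scaleR t (f n) \<in> range R" by simp
    qed
    moreover have "(\<lambda>n. scaleR t (f n)) \<longlonglongrightarrow> scaleR t x" using f(2) by (intro tendsto_intros)
    ultimately show ?thesis unfolding M_def closure_sequential by (intro exI[where x="\<lambda>n. scaleR t (f n)"] conjI)
  qed
  have "y \<in> M" for y
  proof -
    obtain m where mM: "m \<in> M" and mmin: "\<forall>m'\<in>M. (norm (y - m))\<^sup>2 \<le> (norm (y - m'))\<^sup>2"
      using min_dist_point[OF clM z addM scM] by blast
    define v where "v = y - m"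
    have orth: "Re (cinner v u) = 0" if "u \<in> M" for u
    proof (rule orth_from_min)
      fix t
      have "m + scaleR (-t) u \<in> M" using mM that addM scM by blast
      then have h: "(norm (y - m))\<^sup>2 \<le> (norm (y - (m + scaleR (-t) u)))\<^sup>2" using mmin by blast
      have e: "y - (m + scaleR (-t) u) = v + scaleR t u" unfolding v_def by simp
      show "(norm v)\<^sup>2 \<le> (norm (v + scaleR t u))\<^sup>2" using h unfolding e v_def .
    qed
    have "R (R v) \<in> M" unfolding M_def by (rule closure_subset[THEN subsetD]) simp
    then have "Re (cinner v (R (R v))) = 0" by (rule orth)
    moreover have "cinner v (R (R v)) = cnj (cinner (R v) (R v))"
      using cinner_conj[of v "R (R v)"] sym[of "R v" v] by simp
    ultimately have "Re (cinner (R v) (R v)) = 0" by simp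
    then have "R v = 0" by (simp add: cinner_self_norm)
    then have "G v = 0" using RR[of v] zero by simp
    then have "v = 0" using G unfolding bounded_metric_op_def
      by (metis cinner_zero_left zero_complex.sel(1) less_irrefl)
    then show ?thesis using mM unfolding v_def by simp
  qed
  then show "closure (range R) = UNIV" unfolding M_def by blast
qed

theorem lemma3p5:
  fixes G R :: "'a::{complex_inner,complete_space} \<Rightarrow> 'a"
    and S :: "('a \<times> 'a) set"
  assumes "bounded_metric_op G"
    and "is_pos_sqrt G R"
    and "closed_op S"
    and "densely_defined S"
  defines "K \<equiv> converse (gr R) O S O gr R"
  shows "densely_defined K \<and> adjoint_op K = gr R O adjoint_op S O converse (gr R)"
proof
  have sym: "\<And>x y. cinner (R x) y = cinner x (R y)"
    using assms(2) unfolding is_pos_sqrt_def self_adjoint_bounded_def by blast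
  have memK: "(a, b) \<in> K \<longleftrightarrow> (\<exists>y w. a = R y \<and> (y, w) \<in> S \<and> b = R w)" for a b
    unfolding K_def gr_def by blast
  have domK: "Domain K = R ` Domain S"
  proof (rule set_eqI)
    fix a
    have "a \<in> Domain K \<longleftrightarrow> (\<exists>b. (a, b) \<in> K)" by blast
    also have "\<dots> \<longleftrightarrow> (\<exists>y w. a = R y \<and> (y, w) \<in> S)" using memK by blast
    also have "\<dots> \<longleftrightarrow> a \<in> R ` Domain S" by blast
    finally show "a \<in> Domain K \<longleftrightarrow> a \<in> R ` Domain S" .
  qed
  have bl: "bounded_linear R" and dense: "closure (range R) = UNIV"
    using range_dense[OF assms(1,2)] by auto
  have "R ` closure (Domain S) \<subseteq> closure (R ` Domain S)"
    by (rule continuous_image_closure_subset[OF linear_continuous_on[OF bl, of UNIV]]) simp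
  then have "range R \<subseteq> closure (R ` Domain S)"
    using assms(4) unfolding densely_defined_def by simp
  then have "closure (range R) \<subseteq> closure (R ` Domain S)"
    by (rule closure_minimal) simp
  then show "densely_defined K"
    unfolding densely_defined_def domK dense by blast
  show "adjoint_op K = gr R O adjoint_op S O converse (gr R)"
  proof (rule set_eqI, clarify)
    fix y z
    have "(y, z) \<in> adjoint_op K \<longleftrightarrow> (\<forall>a b. (a, b) \<in> S \<longrightarrow> cinner (R b) y = cinner (R a) z)"
    proof -
      have "(y, z) \<in> adjoint_op K \<longleftrightarrow> (\<forall>x w. (x, w) \<in> K \<longrightarrow> cinner w y = cinner x z)"
        unfolding adjoint_op_def by simp
      also have "\<dots> \<longleftrightarrow> (\<forall>a b. (a, b) \<in> S \<longrightarrow> cinner (R b) y = cinner (R a) z)"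
        unfolding memK by blast
      finally show ?thesis .
    qed
    also have "\<dots> \<longleftrightarrow> (\<forall>a b. (a, b) \<in> S \<longrightarrow> cinner b (R y) = cinner a (R z))"
      by (simp add: sym)
    also have "\<dots> \<longleftrightarrow> (R y, R z) \<in> adjoint_op S"
      unfolding adjoint_op_def by simp
    also have "\<dots> \<longleftrightarrow> (y, z) \<in> gr R O adjoint_op S O converse (gr R)"
      unfolding gr_def by blast
    finally show "(y, z) \<in> adjoint_op K \<longleftrightarrow> (y, z) \<in> gr R O adjoint_op S O converse (gr R)" .
  qed
qed

end
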